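(* Let $\partial$ be a quasi-elementary $M_{A,B}$-differential with associated sets $P\subset B$, $X\subset A\setminus B$ and set $H(\partial)$ of $\partial$-boundary homologically essential elements. If $p\in H(\partial)$ appears (with nonzero coefficient) in $\partial(x)$ for some $x\in X$, then $x$ and $p$ form a $\partial'$-pair, where $\partial'$ is $\partial$ regarded as an $M_{A'}$-differential.
   Context: $\mathbb E$ a field; $A$ a finite linearly ordered graded set, $\mathbb E(A)$ the graded vector space with basis $A$; an $M$-differential is a degree $-1$ map with $\partial^2=0$ sending each basis element into the span of strictly smaller basis elements. For $B\subset A$ with $\partial\mathbb E(B)\subset\mathbb E(B)$, $\partial$ is an $M_{A,B}$-differential; $\partial_B$ is its restriction and $\partial_{A\setminus B}$ the induced differential on $\mathbb E(A)/\mathbb E(B)\cong\mathbb E(A\setminus B)$. An $M$-differential is elementary if every basis element maps to $0$ or to a single basis element and no two basis elements map to the same one. For $\partial$ with $\partial_B,\partial_{A\setminus B}$ elementary: $Q=\{b\in B:\partial_Bb\ne0\}$, $R=\partial_B(Q)$, $P=B\setminus(Q\cup R)$, $Y=\{a\in A\setminus B:\partial_{A\setminus B}a\ne0\}$, $Z=\partial_{A\setminus B}(Y)$, $X=(A\setminus B)\setminus(Y\cup Z)$. $\partial$ is quasi-elementary if $\partial_B,\partial_{A\setminus B}$ are elementary, each $\partial(x)$, $x\in X$, contains at most one element of $P$ and with coefficient $1$, and each element of $P$ appears in at most one $\partial(x)$, $x\in X$. $H(\partial)$: writing $B=\{b_1\prec\dots\prec b_K\}$, $I_k=\iota_*H_*(\mathbb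 E(\{b_1,\dots,b_k\}),\partial_B)\cap\partial_*H_*(\mathbb E(A),\mathbb E(B),\partial)$ ($\iota_*$ from inclusion into $\mathbb E(B)$, $\partial_*$ the connecting map), $I_0=0$, and $b_k\in H(\partial)$ iff $I_k\ne I_{k-1}$. If $B=\{b_1\prec\dots\prec b_K\}$ and $A\setminus B=\{a_1\prec\dots\prec a_L\}$, $A'$ denotes the graded set $A$ with the new order $b_1\prec\dots\prec b_K\prec a_1\prec\dots\prec a_L$; an $M_{A,B}$-differential is also an $M$-differential for $A'$. For an $M$-differential $\delta$ on a linearly ordered graded basis, there is a unique elementary $M$-differential $\delta_1$ obtained from $\delta$ by conjugation with a graded automorphism preserving every initial span $\mathrm{span}\{a_1,\dots,a_i\}$ (Barannikov); $u,v$ form a $\delta$-pair if $\delta_1(u)=v$. *)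

theory Defs
  imports Main
begin

text \<open>The basis is a finite set A of elements of type 'a; its grading is
  deg :: 'a => int; its linear order is a strict linear order r on A (a pair (x,y) in r
  means x precedes y).  The vector space E(A) over the field 'k is represented by the
  coefficient functions 'a => 'k vanishing outside A.  A linear map on E(A) (in particular
  a differential) is represented by its matrix d :: 'a => 'a => 'k, where d a c is the
  coefficient of the basis element c in the image of the basis element a.\<close>

definition EV :: "'a set \<Rightarrow> ('a \<Rightarrow> 'k::field) set" where
  "EV A = {v. \<forall>c. c \<notin> A \<longrightarrow> v c = 0}"

definition lin :: "'a set \<Rightarrow> ('a \<Rightarrow> 'a \<Rightarrow> 'k::field) \<Rightarrow> ('a \<Rightarrow> 'k) \<Rightarrow> ('a \<Rightarrow> 'k)" where
  "lin A d v = (\<lambda>c. \<Sum>a\<in>A. v a * d a c)"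

definition bvec :: "'a \<Rightarrow> ('a \<Rightarrow> 'k::field)" where
  "bvec b = (\<lambda>c. if c = b then 1 else 0)"

definition M_differential ::
  "'a set \<Rightarrow> ('a \<times> 'a) set \<Rightarrow> ('a \<Rightarrow> int) \<Rightarrow> ('a \<Rightarrow> 'a \<Rightarrow> 'k::field) \<Rightarrow> bool" where
  "M_differential A r deg d \<longleftrightarrow>
     (\<forall>a c. d a c \<noteq> 0 \<longrightarrow> a \<in> A \<and> c \<in> A \<and> (c, a) \<in> r \<and> deg c = deg a - 1) \<and>
     (\<forall>a\<in>A. \<forall>c. (\<Sum>b\<in>A. d a b * d b c) = 0)"

definition M_AB_differential ::
  "'a set \<Rightarrow> 'a set \<Rightarrow> ('a \<times> 'a) set \<Rightarrow> ('a \<Rightarrow> int) \<Rightarrow> ('a \<Rightarrow> 'a \<Rightarrow> 'k::field) \<Rightarrow> bool" where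
  "M_AB_differential A B r deg d \<longleftrightarrow>
     M_differential A r deg d \<and> B \<subseteq> A \<and> (\<forall>b\<in>B. \<forall>c. d b c \<noteq> 0 \<longrightarrow> c \<in> B)"

text \<open>Restriction of d to E(B), and the induced differential on E(A)/E(B) = E(A \ B).\<close>
definition restr :: "'a set \<Rightarrow> ('a \<Rightarrow> 'a \<Rightarrow> 'k::field) \<Rightarrow> 'a \<Rightarrow> 'a \<Rightarrow> 'k" where
  "restr B d = (\<lambda>a c. if a \<in> B \<and> c \<in> B then d a c else 0)"

definition quot :: "'a set \<Rightarrow> 'a set \<Rightarrow> ('a \<Rightarrow> 'a \<Rightarrow> 'k::field) \<Rightarrow> 'a \<Rightarrow> 'a \<Rightarrow> 'k" where
  "quot A B d = (\<lambda>a c. if a \<in> A - B \<and> c \<in> A - B then d a c else 0)"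

definition elementary ::
  "'a set \<Rightarrow> ('a \<times> 'a) set \<Rightarrow> ('a \<Rightarrow> int) \<Rightarrow> ('a \<Rightarrow> 'a \<Rightarrow> 'k::field) \<Rightarrow> bool" where
  "elementary A r deg d \<longleftrightarrow>
     M_differential A r deg d \<and>
     (\<forall>a\<in>A. d a = (\<lambda>_. 0) \<or> (\<exists>b\<in>A. d a = bvec b)) \<and>
     (\<forall>a1\<in>A. \<forall>a2\<in>A. d a1 \<noteq> (\<lambda>_. 0) \<longrightarrow> d a1 = d a2 \<longrightarrow> a1 = a2)"

definition QE_Q :: "'a set \<Rightarrow> ('a \<Rightarrow> 'a \<Rightarrow> 'k::field) \<Rightarrow> 'a set" where
  "QE_Q B d = {b\<in>B. restr B d b \<noteq> (\<lambda>_. 0)}"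

definition QE_R :: "'a set \<Rightarrow> ('a \<Rightarrow> 'a \<Rightarrow> 'k::field) \<Rightarrow> 'a set" where
  "QE_R B d = {c. \<exists>b\<in>QE_Q B d. restr B d b = bvec c}"

definition QE_P :: "'a set \<Rightarrow> ('a \<Rightarrow> 'a \<Rightarrow> 'k::field) \<Rightarrow> 'a set" where
  "QE_P B d = B - (QE_Q B d \<union> QE_R B d)"

definition QE_Y :: "'a set \<Rightarrow> 'a set \<Rightarrow> ('a \<Rightarrow> 'a \<Rightarrow> 'k::field) \<Rightarrow> 'a set" where
  "QE_Y A B d = {a\<in>A - B. quot A B d a \<noteq> (\<lambda>_. 0)}"

definition QE_Z :: "'a set \<Rightarrow> 'a set \<Rightarrow> ('a \<Rightarrow> 'a \<Rightarrow> 'k::field) \<Rightarrow> 'a set" where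
  "QE_Z A B d = {c. \<exists>a\<in>QE_Y A B d. quot A B d a = bvec c}"

definition QE_X :: "'a set \<Rightarrow> 'a set \<Rightarrow> ('a \<Rightarrow> 'a \<Rightarrow> 'k::field) \<Rightarrow> 'a set" where
  "QE_X A B d = (A - B) - (QE_Y A B d \<union> QE_Z A B d)"

definition quasi_elementary ::
  "'a set \<Rightarrow> 'a set \<Rightarrow> ('a \<times> 'a) set \<Rightarrow> ('a \<Rightarrow> int) \<Rightarrow> ('a \<Rightarrow> 'a \<Rightarrow> 'k::field) \<Rightarrow> bool" where
  "quasi_elementary A B r deg d \<longleftrightarrow>
     M_AB_differential A B r deg d \<and>
     elementary B r deg (restr B d) \<and>
     elementary (A - B) r deg (quot A B d) \<and>
     (\<forall>x\<in>QE_X A B d. card {p\<in>QE_P B d. d x p \<noteq> 0} \<le> 1 \<and>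
                      (\<forall>p\<in>QE_P B d. d x p \<noteq> 0 \<longrightarrow> d x p = 1)) \<and>
     (\<forall>p\<in>QE_P B d. card {x\<in>QE_X A B d. d x p \<noteq> 0} \<le> 1)"

definition supp_in :: "'a set \<Rightarrow> ('a \<Rightarrow> 'k::field) set" where
  "supp_in S = {v. \<forall>c. c \<notin> S \<longrightarrow> v c = 0}"

text \<open>Chain-level description of iota_* H(E(S), d_B) (for an initial segment S of B),
  as the subspace of E(B) of cycles supported in S plus boundaries of d_B; it contains
  the boundaries of d_B and its image in H(E(B), d_B) is the image of iota_*.\<close>
definition cyc_plus_bd ::
  "'a set \<Rightarrow> 'a set \<Rightarrow> ('a \<Rightarrow> 'a \<Rightarrow> 'k::field) \<Rightarrow> ('a \<Rightarrow> 'k) set" where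
  "cyc_plus_bd B S dB =
     {(\<lambda>c. z c + w c) | z w.
        z \<in> EV B \<and> z \<in> supp_in S \<and> lin B dB z = (\<lambda>_. 0) \<and>
        w \<in> lin B dB ` EV B}"

text \<open>Chain-level description of the image of the connecting map
  partial_* : H(E(A), E(B)) -> H(E(B)): boundaries of relative cycles.
  This set contains all d_B-boundaries.\<close>
definition conn_img ::
  "'a set \<Rightarrow> 'a set \<Rightarrow> ('a \<Rightarrow> 'a \<Rightarrow> 'k::field) \<Rightarrow> ('a \<Rightarrow> 'k) set" where
  "conn_img A B d = {lin A d v | v. v \<in> EV A \<and> lin A d v \<in> EV B}"

text \<open>Since both subspaces contain the boundaries of d_B, I_k corresponds bijectively to
  cyc_plus_bd B {b_1..b_k} (restr B d) \<inter> conn_img A B d, so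
  b_k \<in> H(d) iff these sets differ for the segments {b_1..b_k} and {b_1..b_(k-1)}.\<close>
definition H_ess ::
  "'a set \<Rightarrow> 'a set \<Rightarrow> ('a \<times> 'a) set \<Rightarrow> ('a \<Rightarrow> 'a \<Rightarrow> 'k::field) \<Rightarrow> 'a set" where
  "H_ess A B r d =
     {b\<in>B. cyc_plus_bd B {c\<in>B. c = b \<or> (c, b) \<in> r} (restr B d) \<inter> conn_img A B d
          \<noteq> cyc_plus_bd B {c\<in>B. (c, b) \<in> r} (restr B d) \<inter> conn_img A B d}"

text \<open>The order of A': all of B (in its old order) before all of A \ B (in its old order).\<close>
definition reorder :: "'a set \<Rightarrow> 'a set \<Rightarrow> ('a \<times> 'a) set \<Rightarrow> ('a \<times> 'a) set" where
  "reorder A B r =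
     {(x, y). x \<in> A \<and> y \<in> A \<and>
              ((x \<in> B \<and> y \<notin> B) \<or> ((x \<in> B \<longleftrightarrow> y \<in> B) \<and> (x, y) \<in> r))}"

definition init_span :: "'a set \<Rightarrow> ('a \<times> 'a) set \<Rightarrow> 'a \<Rightarrow> ('a \<Rightarrow> 'k::field) set" where
  "init_span A r a = EV A \<inter> supp_in {c\<in>A. c = a \<or> (c, a) \<in> r}"

definition graded_aut_initial ::
  "'a set \<Rightarrow> ('a \<times> 'a) set \<Rightarrow> ('a \<Rightarrow> int) \<Rightarrow> ('a \<Rightarrow> 'a \<Rightarrow> 'k::field) \<Rightarrow> bool" where
  "graded_aut_initial A r deg T \<longleftrightarrow>
     (\<forall>a c. T a c \<noteq> 0 \<longrightarrow> a \<in> A \<and> c \<in> A \<and> deg c = deg a) \<and>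
     bij_betw (lin A T) (EV A) (EV A) \<and>
     (\<forall>a\<in>A. lin A T ` init_span A r a = init_span A r a)"

definition barannikov ::
  "'a set \<Rightarrow> ('a \<times> 'a) set \<Rightarrow> ('a \<Rightarrow> int) \<Rightarrow> ('a \<Rightarrow> 'a \<Rightarrow> 'k::field) \<Rightarrow> 'a \<Rightarrow> 'a \<Rightarrow> 'k" where
  "barannikov A r deg d =
     (THE d1. elementary A r deg d1 \<and>
        (\<exists>T. graded_aut_initial A r deg T \<and>
             (\<forall>v\<in>EV A. lin A d1 (lin A T v) = lin A T (lin A d v))))"

definition is_pair ::
  "'a set \<Rightarrow> ('a \<times> 'a) set \<Rightarrow> ('a \<Rightarrow> int) \<Rightarrow> ('a \<Rightarrow> 'a \<Rightarrow> 'k::field) \<Rightarrow> 'a \<Rightarrow> 'a \<Rightarrow> bool" where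
  "is_pair A r deg d u v \<longleftrightarrow> barannikov A r deg d u = bvec v"

end

theory Submission
  imports Defs
begin

lemma sum_single:
  assumes "finite A" "a \<in> A" "\<And>b. b \<in> A \<Longrightarrow> b \<noteq> a \<Longrightarrow> f b = 0"
  shows "sum f A = (f a :: 'b::comm_monoid_add)"
  using sum.remove[OF assms(1,2), of f] assms(3) by (simp add: sum.neutral)

lemma lin_comp:
  assumes "finite A"
  shows "lin A N (lin A M v) = lin A (\<lambda>a c. \<Sum>b\<in>A. M a b * N b c) v"
proof -
  have "(\<Sum>b\<in>A. (\<Sum>a\<in>A. v a * M a b) * N b c) = (\<Sum>a\<in>A. v a * (\<Sum>b\<in>A. M a b * N b c))" for c
  proof -
    have "(\<Sum>b\<in>A. (\<Sum>a\<in>A. v a * M a b) * N b c) = (\<Sum>b\<in>A. \<Sum>a\<in>A. v a * (M a b * N b c))"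
      by (simp add: sum_distrib_right mult.assoc)
    also have "\<dots> = (\<Sum>a\<in>A. \<Sum>b\<in>A. v a * (M a b * N b c))" by (rule sum.swap)
    also have "\<dots> = (\<Sum>a\<in>A. v a * (\<Sum>b\<in>A. M a b * N b c))" by (simp add: sum_distrib_left)
    finally show ?thesis .
  qed
  then show ?thesis unfolding lin_def by simp
qed

lemma lin_bvec:
  assumes "finite A" "a \<in> A"
  shows "lin A M (bvec a) = M a"
proof (rule ext)
  fix c show "lin A M (bvec a) c = M a c"
    unfolding lin_def using sum_single[OF assms, of "\<lambda>b. bvec a b * M b c"] by (simp add: bvec_def)
qed

lemma lin_EV:
  assumes "\<And>a c. M a c \<noteq> 0 \<Longrightarrow> c \<in> A"
  shows "lin A M v \<in> EV A"
  using assms unfolding lin_def EV_def by (auto intro!: sum.neutral)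

lemma lin_rows_cong:
  assumes "\<And>a c. a \<in> A \<Longrightarrow> M a c = N a c"
  shows "lin A M v = lin A N v"
  using assms unfolding lin_def by simp

lemma lin_zero: "lin A M (\<lambda>_. 0) = (\<lambda>_. 0)"
  unfolding lin_def by simp

lemma bvec_in_init_span:
  assumes "a \<in> A" shows "bvec a \<in> init_span A r a"
  using assms unfolding init_span_def EV_def supp_in_def bvec_def by auto

lemma bvec_inj: "bvec a = (bvec b :: 'a \<Rightarrow> 'k::field) \<Longrightarrow> a = b"
  unfolding bvec_def by (metis one_neq_zero)

definition GG :: "'a set \<Rightarrow> ('a \<times> 'a) set \<Rightarrow> ('a \<Rightarrow> 'a \<Rightarrow> 'k::field) \<Rightarrow> 'a \<Rightarrow> 'a set \<Rightarrow> bool" where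
  "GG A r e a S \<longleftrightarrow> (\<exists>v. v \<in> init_span A r a \<and> v a \<noteq> 0 \<and> lin A e v \<in> supp_in S)"

definition DD :: "'a set \<Rightarrow> ('a \<times> 'a) set \<Rightarrow> 'a \<Rightarrow> 'a set" where
  "DD A r c = {c'\<in>A. c' = c \<or> (c', c) \<in> r}"

lemma init_span_DD: "init_span A r a = EV A \<inter> supp_in (DD A r a)"
  unfolding init_span_def DD_def by simp

locale gaut =
  fixes A :: "'a set" and r and deg :: "'a \<Rightarrow> int" and T :: "'a \<Rightarrow> 'a \<Rightarrow> 'k::field"
  assumes fin: "finite A" and tr: "trans r" and irr: "irrefl r"
    and ga: "graded_aut_initial A r deg T"
begin

lemma T_A: "T b c \<noteq> 0 \<Longrightarrow> b \<in> A \<and> c \<in> A"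
  using ga unfolding graded_aut_initial_def by blast

lemma bij: "bij_betw (lin A T) (EV A) (EV A)"
  using ga unfolding graded_aut_initial_def by blast

lemma span_eq: "a \<in> A \<Longrightarrow> lin A T ` init_span A r a = init_span A r a"
  using ga unfolding graded_aut_initial_def by blast

lemma T_tri: assumes "T b c \<noteq> 0" shows "c = b \<or> (c, b) \<in> r"
proof -
  have b: "b \<in> A" using T_A assms by blast
  have "lin A T (bvec b) \<in> init_span A r b" using span_eq[OF b] bvec_in_init_span[OF b] by blast
  then have "T b \<in> supp_in {c\<in>A. c = b \<or> (c, b) \<in> r}"
    using lin_bvec[OF fin b, of T] unfolding init_span_def by simp
  then show ?thesis using assms unfolding supp_in_def by blast
qed

lemma T_coeff:
  assumes a: "a \<in> A" and v: "v \<in> init_span A r a"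
  shows "lin A T v a = v a * T a a"
proof -
  have "lin A T v a = (\<Sum>b\<in>A. v b * T b a)" unfolding lin_def by simp
  also have "\<dots> = v a * T a a"
  proof (rule sum_single[OF fin a])
    fix b assume b: "b \<in> A" "b \<noteq> a"
    show "v b * T b a = 0"
    proof (rule ccontr)
      assume "v b * T b a \<noteq> 0"
      then have "v b \<noteq> 0" "T b a \<noteq> 0" by auto
      then have "(b, a) \<in> r" "(a, b) \<in> r" using v b T_tri unfolding init_span_def supp_in_def by auto
      then show False using tr irr unfolding trans_def irrefl_def by blast
    qed
  qed
  finally show ?thesis .
qed

lemma T_diag: assumes a: "a \<in> A" shows "T a a \<noteq> 0"
proof -
  obtain u where u: "u \<in> init_span A r a" "lin A T u = bvec a"
    using span_eq[OF a] bvec_in_init_span[OF a] by (metis imageE)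
  have "lin A T u a = 1" using u by (simp add: bvec_def)
  then show ?thesis using T_coeff[OF a u(1)] by auto
qed

lemma lin_T_zero: "u \<in> EV A \<Longrightarrow> lin A T u = (\<lambda>_. 0) \<Longrightarrow> u = (\<lambda>_. 0)"
proof -
  assume u: "u \<in> EV A" "lin A T u = (\<lambda>_. 0)"
  have "(\<lambda>_. 0) \<in> EV A" unfolding EV_def by simp
  moreover have "lin A T (\<lambda>_. 0) = (\<lambda>_. 0)" by (rule lin_zero)
  moreover have "inj_on (lin A T) (EV A)" using bij unfolding bij_betw_def by blast
  ultimately show ?thesis using u inj_onD by metis
qed

lemma key:
  assumes u: "u \<in> EV A" and S: "S = {} \<or> (\<exists>c\<in>A. S = DD A r c)"
  shows "lin A T u \<in> supp_in S \<longleftrightarrow> u \<in> supp_in S"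
  using S
proof
  assume S0: "S = {}"
  have "u \<in> supp_in S \<longleftrightarrow> u = (\<lambda>_. 0)" using S0 unfolding supp_in_def by auto
  moreover have "lin A T u \<in> supp_in S \<longleftrightarrow> lin A T u = (\<lambda>_. 0)" using S0 unfolding supp_in_def by auto
  moreover have "lin A T u = (\<lambda>_. 0) \<longleftrightarrow> u = (\<lambda>_. 0)"
    using lin_T_zero[OF u] lin_zero[of A T] by metis
  ultimately show ?thesis by blast
next
  assume "\<exists>c\<in>A. S = DD A r c"
  then obtain c where c: "c \<in> A" "S = DD A r c" by blast
  have eqS: "init_span A r c = EV A \<inter> supp_in S" using c(2) init_span_DD by simp
  have TEV: "lin A T u \<in> EV A" using bij u unfolding bij_betw_def by blast
  have inj: "inj_on (lin A T) (EV A)" using bij unfolding bij_betw_def by blast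
  show ?thesis
  proof
    assume "lin A T u \<in> supp_in S"
    then have "lin A T u \<in> init_span A r c" using TEV by (simp add: eqS)
    then obtain u' where u': "u' \<in> init_span A r c" "lin A T u' = lin A T u"
      using span_eq[OF c(1)] by (metis imageE)
    have "u' \<in> EV A" using u' unfolding init_span_def by blast
    then have "u' = u" using inj_onD[OF inj u'(2) _ u] by simp
    then show "u \<in> supp_in S" using u'(1) by (simp add: eqS)
  next
    assume "u \<in> supp_in S"
    then have "u \<in> init_span A r c" using u by (simp add: eqS)
    then have "lin A T u \<in> init_span A r c" using span_eq[OF c(1)] by blast
    then show "lin A T u \<in> supp_in S" by (simp add: eqS)
  qed
qed

lemma G_inv:
  assumes conj: "\<forall>v\<in>EV A. lin A e1 (lin A T v) = lin A T (lin A e v)"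
    and eA: "\<And>b c. e b c \<noteq> 0 \<Longrightarrow> c \<in> A"
    and S: "S = {} \<or> (\<exists>c\<in>A. S = DD A r c)" and a: "a \<in> A"
  shows "GG A r e a S \<longleftrightarrow> GG A r e1 a S"
proof -
  have eEV: "lin A e v \<in> EV A" for v by (rule lin_EV, erule eA)
  show ?thesis
proof
  assume "GG A r e a S"
  then obtain v where v: "v \<in> init_span A r a" "v a \<noteq> 0" "lin A e v \<in> supp_in S"
    unfolding GG_def by blast
  have vE: "v \<in> EV A" using v unfolding init_span_def by blast
  have w1: "lin A T v \<in> init_span A r a" using span_eq[OF a] v(1) by blast
  have w2: "lin A T v a \<noteq> 0" using T_coeff[OF a v(1)] T_diag[OF a] v(2) by simp
  have "lin A e1 (lin A T v) \<in> supp_in S"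
    using conj vE key[OF eEV[of v] S] v(3) by simp
  then show "GG A r e1 a S" unfolding GG_def using w1 w2 by blast
next
  assume "GG A r e1 a S"
  then obtain w where w: "w \<in> init_span A r a" "w a \<noteq> 0" "lin A e1 w \<in> supp_in S"
    unfolding GG_def by blast
  obtain v where v: "v \<in> init_span A r a" "lin A T v = w"
    using span_eq[OF a] w(1) by (metis imageE)
  have vE: "v \<in> EV A" using v unfolding init_span_def by blast
  have "v a \<noteq> 0" using T_coeff[OF a v(1)] v(2) w(2) by auto
  moreover have "lin A e v \<in> supp_in S"
  proof -
    have "lin A e1 (lin A T v) = lin A T (lin A e v)" using conj vE by blast
    then have "lin A T (lin A e v) = lin A e1 w" using v(2) by simp
    then show ?thesis using key[OF eEV[of v] S] w(3) by simp
  qed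
  ultimately show "GG A r e a S" unfolding GG_def using v(1) by blast
qed
qed

end

lemma elem_out:
  assumes el: "elementary A r deg e" and a: "a \<notin> A"
  shows "e a = (\<lambda>_. 0)"
proof (rule ext)
  fix c
  have "\<forall>a c. e a c \<noteq> 0 \<longrightarrow> a \<in> A" using el unfolding elementary_def M_differential_def by blast
  then show "e a c = 0" using a by blast
qed

lemma elem_coeff:
  assumes el: "elementary A r deg e" and fin: "finite A" and a: "a \<in> A"
    and ea: "e a = bvec c" and v: "v \<in> init_span A r a"
  shows "lin A e v c = v a"
proof -
  have "lin A e v c = (\<Sum>b\<in>A. v b * e b c)" unfolding lin_def by simp
  also have "\<dots> = v a * e a c"
  proof (rule sum_single[OF fin a])
    fix b assume b: "b \<in> A" "b \<noteq> a"
    show "v b * e b c = 0"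
    proof (rule ccontr)
      assume "v b * e b c \<noteq> 0"
      then have ne: "e b c \<noteq> 0" by auto
      then have "e b \<noteq> (\<lambda>_. 0)" by auto
      then obtain c' where c': "e b = bvec c'" using el b unfolding elementary_def by blast
      then have "c' = c" using ne by (simp add: bvec_def split: if_splits)
      then have "e b = e a" using ea c' by simp
      then show False using el b a \<open>e b \<noteq> (\<lambda>_. 0)\<close> unfolding elementary_def by blast
    qed
  qed
  finally show ?thesis using ea by (simp add: bvec_def)
qed

lemma elem_G_zero:
  assumes el: "elementary A r deg e" and fin: "finite A" and a: "a \<in> A"
  shows "GG A r e a {} \<longleftrightarrow> e a = (\<lambda>_. 0)"
proof
  assume "e a = (\<lambda>_. 0)"
  then show "GG A r e a {}" unfolding GG_def
    using bvec_in_init_span[OF a] lin_bvec[OF fin a, of e]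
    by (intro exI[of _ "bvec a"]) (auto simp: bvec_def supp_in_def)
next
  assume "GG A r e a {}"
  then obtain v where v: "v \<in> init_span A r a" "v a \<noteq> 0" "lin A e v \<in> supp_in {}"
    unfolding GG_def by blast
  show "e a = (\<lambda>_. 0)"
  proof (rule ccontr)
    assume "e a \<noteq> (\<lambda>_. 0)"
    then obtain c where "e a = bvec c" using el a unfolding elementary_def by blast
    then have "lin A e v c = v a" using elem_coeff[OF el fin a _ v(1)] by blast
    then show False using v unfolding supp_in_def by auto
  qed
qed

lemma elem_G_pos:
  assumes el: "elementary A r deg e" and fin: "finite A" and a: "a \<in> A"
    and ea: "e a = bvec c" and tr: "trans r" and irr: "irrefl r"
  shows "GG A r e a (DD A r c) \<and> (\<forall>c'\<in>A. (c', c) \<in> r \<longrightarrow> \<not> GG A r e a (DD A r c'))"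
proof
  show "GG A r e a (DD A r c)" unfolding GG_def
  proof (intro exI[of _ "bvec a"] conjI)
    have "e a c \<noteq> 0" using ea by (simp add: bvec_def)
    then have "c \<in> A" using el unfolding elementary_def M_differential_def by blast
    then show "lin A e (bvec a) \<in> supp_in (DD A r c)"
      using lin_bvec[OF fin a, of e] ea by (auto simp: bvec_def supp_in_def DD_def)
  next
    show "bvec a \<in> init_span A r a" by (rule bvec_in_init_span[OF a])
  qed (auto simp: bvec_def)
  show "\<forall>c'\<in>A. (c', c) \<in> r \<longrightarrow> \<not> GG A r e a (DD A r c')"
  proof (intro ballI impI notI)
    fix c' assume c': "c' \<in> A" "(c', c) \<in> r" "GG A r e a (DD A r c')"
    then obtain v where v: "v \<in> init_span A r a" "v a \<noteq> 0" "lin A e v \<in> supp_in (DD A r c')"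
      unfolding GG_def by blast
    have "lin A e v c = v a" using elem_coeff[OF el fin a ea v(1)] .
    then have "c \<in> DD A r c'" using v unfolding supp_in_def by auto
    then show False using c' tr irr unfolding DD_def trans_def irrefl_def by blast
  qed
qed

lemma elem_G_pos_rev:
  assumes el: "elementary A r deg e" and fin: "finite A" and a: "a \<in> A"
    and ea: "e a = bvec c0" and c: "c \<in> A"
    and G1: "GG A r e a (DD A r c)" and G2: "\<forall>c'\<in>A. (c', c) \<in> r \<longrightarrow> \<not> GG A r e a (DD A r c')"
    and tr: "trans r" and irr: "irrefl r"
  shows "c0 = c"
proof -
  obtain v where v: "v \<in> init_span A r a" "v a \<noteq> 0" "lin A e v \<in> supp_in (DD A r c)"
    using G1 unfolding GG_def by blast
  have "lin A e v c0 = v a" using elem_coeff[OF el fin a ea v(1)] .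
  then have "c0 \<in> DD A r c" using v unfolding supp_in_def by auto
  then have "c0 = c \<or> (c0 \<in> A \<and> (c0, c) \<in> r)" unfolding DD_def by auto
  then show ?thesis
  proof
    assume "c0 \<in> A \<and> (c0, c) \<in> r"
    then have "GG A r e a (DD A r c0)" using elem_G_pos[OF el fin a ea tr irr] by blast
    then show ?thesis using G2 \<open>c0 \<in> A \<and> (c0, c) \<in> r\<close> by blast
  qed
qed

lemma uniqueness:
  assumes fin: "finite A" and tr: "trans r" and irr: "irrefl r"
    and eA: "\<And>b c. e b c \<noteq> 0 \<Longrightarrow> c \<in> A"
    and el1: "elementary A r deg e1" and T1: "graded_aut_initial A r deg T1"
    and c1: "\<forall>v\<in>EV A. lin A e1 (lin A T1 v) = lin A T1 (lin A e v)"
    and el2: "elementary A r deg e2" and T2: "graded_aut_initial A r deg T2"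
    and c2: "\<forall>v\<in>EV A. lin A e2 (lin A T2 v) = lin A T2 (lin A e v)"
  shows "e1 = e2"
proof (rule ext)
  fix a
  interpret g1: gaut A r deg T1 using fin tr irr T1 by unfold_locales
  interpret g2: gaut A r deg T2 using fin tr irr T2 by unfold_locales
  have inv: "GG A r e1 a S \<longleftrightarrow> GG A r e2 a S" if "S = {} \<or> (\<exists>c\<in>A. S = DD A r c)" "a \<in> A" for S
    using g1.G_inv[OF c1 eA that] g2.G_inv[OF c2 eA that] by simp
  show "e1 a = e2 a"
  proof (cases "a \<in> A")
    case False
    then show ?thesis using elem_out[OF el1] elem_out[OF el2] by simp
  next
    case a: True
    show ?thesis
    proof (cases "e1 a = (\<lambda>_. 0)")
      case True
      have "GG A r e1 a {} \<longleftrightarrow> GG A r e2 a {}" by (rule inv) (simp, rule a)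
      then show ?thesis using True elem_G_zero[OF el1 fin a] elem_G_zero[OF el2 fin a] by simp
    next
      case False
      then obtain c where c: "c \<in> A" "e1 a = bvec c" using el1 a unfolding elementary_def by blast
      have "GG A r e1 a {} \<longleftrightarrow> GG A r e2 a {}" by (rule inv) (simp, rule a)
      then have nz2: "e2 a \<noteq> (\<lambda>_. 0)"
        using elem_G_zero[OF el1 fin a] elem_G_zero[OF el2 fin a] False by simp
      then obtain c0 where c0: "e2 a = bvec c0" using el2 a unfolding elementary_def by blast
      have P1: "GG A r e1 a (DD A r c) \<and> (\<forall>c'\<in>A. (c', c) \<in> r \<longrightarrow> \<not> GG A r e1 a (DD A r c'))"
        using elem_G_pos[OF el1 fin a c(2) tr irr] .
      have invD: "GG A r e1 a (DD A r c') \<longleftrightarrow> GG A r e2 a (DD A r c')" if "c' \<in> A" for c'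
      proof (rule inv)
        show "DD A r c' = {} \<or> (\<exists>c''\<in>A. DD A r c' = DD A r c'')" using that by blast
      qed (rule a)
      have G1: "GG A r e2 a (DD A r c)" using P1 invD[OF c(1)] by simp
      have G2: "\<forall>c'\<in>A. (c', c) \<in> r \<longrightarrow> \<not> GG A r e2 a (DD A r c')"
      proof (intro ballI impI)
        fix c' assume "c' \<in> A" "(c', c) \<in> r"
        then show "\<not> GG A r e2 a (DD A r c')" using P1 invD[of c'] by simp
      qed
      have "c0 = c" using elem_G_pos_rev[OF el2 fin a c0 c(1) G1 G2 tr irr] .
      then show ?thesis using c c0 by simp
    qed
  qed
qed



lemma lin_lincomb:
  "lin A M (\<lambda>c. u c + k * w c) = (\<lambda>c. lin A M u c + k * lin A M w c)"
  unfolding lin_def by (simp add: sum.distrib sum_distrib_left algebra_simps)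

lemma lin_neg:
  "lin A M (\<lambda>c. - u c) = (\<lambda>c. - lin A M u c)"
  unfolding lin_def by (simp add: sum_negf)

lemma lin_diff:
  "lin A M (\<lambda>c. u c - w c) = (\<lambda>c. lin A M u c - lin A M w c)"
  unfolding lin_def by (simp add: sum_subtractf algebra_simps)

locale qe =
  fixes A B :: "'a set" and r :: "('a \<times> 'a) set" and deg :: "'a \<Rightarrow> int"
    and d :: "'a \<Rightarrow> 'a \<Rightarrow> 'k::field"
  assumes fin: "finite A" and slo: "strict_linear_order_on A r"
    and qel: "quasi_elementary A B r deg d"
begin

abbreviation "P \<equiv> QE_P B d"
abbreviation "Q \<equiv> QE_Q B d"
abbreviation "R \<equiv> QE_R B d"
abbreviation "X \<equiv> QE_X A B d"
abbreviation "Y \<equiv> QE_Y A B d"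
abbreviation "Z \<equiv> QE_Z A B d"
abbreviation "qd \<equiv> quot A B d"

lemma tr: "trans r" and irr: "irrefl r" using slo unfolding strict_linear_order_on_def by auto

lemma qparts: "M_AB_differential A B r deg d" "elementary B r deg (restr B d)"
  "elementary (A - B) r deg qd"
  "\<forall>x\<in>X. card {p\<in>P. d x p \<noteq> 0} \<le> 1 \<and> (\<forall>p\<in>P. d x p \<noteq> 0 \<longrightarrow> d x p = 1)"
  "\<forall>p\<in>P. card {x\<in>X. d x p \<noteq> 0} \<le> 1"
  using qel unfolding quasi_elementary_def by blast+

lemma Md: "M_differential A r deg d" and BA: "B \<subseteq> A"
  and Binv': "\<forall>b\<in>B. \<forall>c. d b c \<noteq> 0 \<longrightarrow> c \<in> B"
  using qparts(1) unfolding M_AB_differential_def by blast+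

lemma Binv: "b \<in> B \<Longrightarrow> d b c \<noteq> 0 \<Longrightarrow> c \<in> B"
  using Binv' by blast

lemma elB: "elementary B r deg (restr B d)" and elQ: "elementary (A - B) r deg qd"
  by (rule qparts(2), rule qparts(3))

lemma qX1: "x \<in> X \<Longrightarrow> card {p\<in>P. d x p \<noteq> 0} \<le> 1"
  and qX2: "x \<in> X \<Longrightarrow> p \<in> P \<Longrightarrow> d x p \<noteq> 0 \<Longrightarrow> d x p = 1"
  and qP: "p \<in> P \<Longrightarrow> card {x\<in>X. d x p \<noteq> 0} \<le> 1"
  using qparts(4,5) by blast+

lemma Md_parts: "\<forall>a c. d a c \<noteq> 0 \<longrightarrow> a \<in> A \<and> c \<in> A \<and> (c, a) \<in> r \<and> deg c = deg a - 1"
  "\<forall>a\<in>A. \<forall>c. (\<Sum>b\<in>A. d a b * d b c) = 0"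
  using Md unfolding M_differential_def by blast+

lemma dsupp: "d a c \<noteq> 0 \<Longrightarrow> a \<in> A \<and> c \<in> A \<and> (c, a) \<in> r \<and> deg c = deg a - 1"
  using Md_parts(1) by blast

lemma dsq: "a \<in> A \<Longrightarrow> (\<Sum>b\<in>A. d a b * d b c) = 0"
  using Md_parts(2) by blast

lemma restr_eq: "b \<in> B \<Longrightarrow> restr B d b = d b"
proof (rule ext)
  fix c assume b: "b \<in> B"
  show "restr B d b c = d b c"
  proof (cases "c \<in> B")
    case False then show ?thesis using Binv[OF b] b unfolding restr_def by auto
  qed (simp add: restr_def b)
qed

lemma Q_def': "Q = {b\<in>B. d b \<noteq> (\<lambda>_. 0)}"
  unfolding QE_Q_def using restr_eq by auto

lemma QB: "Q \<subseteq> B" unfolding QE_Q_def by auto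

lemma notQ: "b \<in> B \<Longrightarrow> b \<notin> Q \<Longrightarrow> d b = (\<lambda>_. 0)"
  using Q_def' by auto

definition img :: "'a \<Rightarrow> 'a" where "img q = (SOME c. c \<in> B \<and> d q = bvec c)"

lemma elB_parts: "\<forall>a\<in>B. restr B d a = (\<lambda>_. 0) \<or> (\<exists>b\<in>B. restr B d a = bvec b)"
  "\<forall>a1\<in>B. \<forall>a2\<in>B. restr B d a1 \<noteq> (\<lambda>_. 0) \<longrightarrow> restr B d a1 = restr B d a2 \<longrightarrow> a1 = a2"
  using elB unfolding elementary_def by blast+

lemma elQ_parts: "\<forall>a\<in>A - B. qd a = (\<lambda>_. 0) \<or> (\<exists>b\<in>A - B. qd a = bvec b)"
  "\<forall>a1\<in>A - B. \<forall>a2\<in>A - B. qd a1 \<noteq> (\<lambda>_. 0) \<longrightarrow> qd a1 = qd a2 \<longrightarrow> a1 = a2"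
  "\<forall>a\<in>A - B. \<forall>c. (\<Sum>b\<in>A - B. qd a b * qd b c) = 0"
  using elQ unfolding elementary_def M_differential_def by blast+

lemma img: assumes "q \<in> Q" shows "img q \<in> B" "d q = bvec (img q)"
proof -
  have qB: "q \<in> B" and nz: "restr B d q \<noteq> (\<lambda>_. 0)" using assms unfolding QE_Q_def by auto
  then have "\<exists>b\<in>B. restr B d q = bvec b" using elB_parts(1) by blast
  then obtain c where c: "c \<in> B" "restr B d q = bvec c" by blast
  then have "\<exists>c. c \<in> B \<and> d q = bvec c" using restr_eq[OF qB] by auto
  then have "img q \<in> B \<and> d q = bvec (img q)" unfolding img_def by (rule someI_ex)
  then show "img q \<in> B" "d q = bvec (img q)" by auto
qed

lemma R_def': "R = img ` Q"
proof
  show "R \<subseteq> img ` Q"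
  proof
    fix c assume "c \<in> R"
    then obtain b where b: "b \<in> Q" "restr B d b = bvec c" unfolding QE_R_def by blast
    have bB: "b \<in> B" using b(1) QB by auto
    have "bvec c = (bvec (img b) :: 'a \<Rightarrow> 'k)" using img(2)[OF b(1)] restr_eq[OF bB] b(2) by simp
    then have "c = img b" by (rule bvec_inj)
    then show "c \<in> img ` Q" using b by blast
  qed
  show "img ` Q \<subseteq> R"
  proof
    fix c assume "c \<in> img ` Q"
    then obtain q where q: "q \<in> Q" "c = img q" by blast
    have qB: "q \<in> B" using q(1) QB by auto
    have "restr B d q = bvec c" using img(2)[OF q(1)] restr_eq[OF qB] q(2) by simp
    then show "c \<in> R" unfolding QE_R_def using q(1) by blast
  qed
qed

lemma img_inj: assumes "q1 \<in> Q" "q2 \<in> Q" "img q1 = img q2" shows "q1 = q2"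
proof -
  have b: "q1 \<in> B" "q2 \<in> B" using assms QB by auto
  have e: "restr B d q1 = restr B d q2" using img(2)[OF assms(1)] img(2)[OF assms(2)] assms(3) restr_eq[OF b(1)] restr_eq[OF b(2)] by simp
  have nz: "restr B d q1 \<noteq> (\<lambda>_. 0)" using assms unfolding QE_Q_def by auto
  have inj: "\<forall>a1\<in>B. \<forall>a2\<in>B. restr B d a1 \<noteq> (\<lambda>_. 0) \<longrightarrow> restr B d a1 = restr B d a2 \<longrightarrow> a1 = a2"
    by (rule elB_parts(2))
  show ?thesis using inj b e nz by blast
qed

lemma RB: "R \<subseteq> B"
proof
  fix c assume "c \<in> R"
  then obtain q where "q \<in> Q" "c = img q" using R_def' by blast
  then show "c \<in> B" using img(1) by simp
qed

lemma dR: assumes "c \<in> R" shows "d c = (\<lambda>_. 0)"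
proof (rule ext)
  fix e
  obtain q where q: "q \<in> Q" "img q = c" using assms unfolding R_def' by blast
  have qA: "q \<in> A" "c \<in> A" using q(1) QB BA RB assms by auto
  have dq: "d q = bvec c" using img(2)[OF q(1)] q(2) by simp
  have "0 = (\<Sum>b\<in>A. d q b * d b e)" using dsq[OF qA(1)] by simp
  also have "\<dots> = d q c * d c e"
    by (rule sum_single[OF fin qA(2)]) (simp add: dq bvec_def)
  also have "\<dots> = d c e" by (simp add: dq bvec_def)
  finally show "d c e = 0" by simp
qed

lemma QR_disj: "Q \<inter> R = {}"
proof -
  have "c \<notin> Q" if "c \<in> R" for c
  proof
    assume "c \<in> Q"
    then have "d c \<noteq> (\<lambda>_. 0)" unfolding Q_def' by blast
    then show False using dR[OF that] by simp
  qed
  then show ?thesis by blast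
qed

lemma PB: "P \<subseteq> B" unfolding QE_P_def by auto
lemma P_def': "P = B - (Q \<union> R)" unfolding QE_P_def by simp

lemma dP: "p \<in> P \<Longrightarrow> d p = (\<lambda>_. 0)"
  using notQ P_def' by auto

definition qof :: "'a \<Rightarrow> 'a" where "qof c = (SOME q. q \<in> Q \<and> img q = c)"

lemma qof: assumes "c \<in> R" shows "qof c \<in> Q" "img (qof c) = c"
proof -
  have "\<exists>q. q \<in> Q \<and> img q = c" using assms R_def' by auto
  then have "qof c \<in> Q \<and> img (qof c) = c" unfolding qof_def by (rule someI_ex)
  then show "qof c \<in> Q" "img (qof c) = c" by auto
qed

lemma qof_img: "q \<in> Q \<Longrightarrow> qof (img q) = q"
  using qof img_inj R_def' by blast

lemma linB:
  assumes w: "\<And>c. c \<notin> B \<Longrightarrow> w c = 0"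
  shows "lin A d w c = (if c \<in> R then w (qof c) else 0)"
proof -
  have "lin A d w c = (\<Sum>b\<in>A. w b * d b c)" unfolding lin_def by simp
  also have "\<dots> = (if c \<in> R then w (qof c) else 0)"
  proof (cases "c \<in> R")
    case True
    have qA: "qof c \<in> A" using qof(1)[OF True] QB BA by auto
    have "(\<Sum>b\<in>A. w b * d b c) = w (qof c) * d (qof c) c"
    proof (rule sum_single[OF fin qA])
      fix b assume b: "b \<in> A" "b \<noteq> qof c"
      show "w b * d b c = 0"
      proof (cases "b \<in> Q")
        case True
        then have "img b \<noteq> c" using b qof_img by metis
        then show ?thesis using img(2)[OF True] by (simp add: bvec_def)
      next
        case False
        then show ?thesis using w notQ by (cases "b \<in> B") auto
      qed
    qed
    also have "\<dots> = w (qof c)" using img(2)[OF qof(1)[OF True]] qof(2)[OF True] by (simp add: bvec_def)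
    finally show ?thesis using True by simp
  next
    case False
    have "w b * d b c = 0" if "b \<in> A" for b
    proof (cases "b \<in> Q")
      case True
      then have "img b \<noteq> c" using False R_def' by auto
      then show ?thesis using img(2)[OF True] by (simp add: bvec_def)
    next
      case False
      then show ?thesis using w notQ by (cases "b \<in> B") auto
    qed
    then show ?thesis using False by (simp add: sum.neutral)
  qed
  finally show ?thesis .
qed

end


context qe begin

lemma qd_def': "qd a c = (if a \<in> A - B \<and> c \<in> A - B then d a c else 0)"
  unfolding quot_def by simp

definition zof :: "'a \<Rightarrow> 'a" where "zof y = (SOME z. z \<in> A - B \<and> qd y = bvec z)"

lemma zof: assumes "y \<in> Y" shows "zof y \<in> A - B" "qd y = bvec (zof y)"
proof -
  have yAB: "y \<in> A - B" and nz: "qd y \<noteq> (\<lambda>_. 0)" using assms unfolding QE_Y_def by auto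
  then have "\<exists>b\<in>A - B. qd y = bvec b" using elQ_parts(1) by blast
  then have "\<exists>z. z \<in> A - B \<and> qd y = bvec z" by blast
  then have "zof y \<in> A - B \<and> qd y = bvec (zof y)" unfolding zof_def by (rule someI_ex)
  then show "zof y \<in> A - B" "qd y = bvec (zof y)" by auto
qed

lemma YAB: "Y \<subseteq> A - B" unfolding QE_Y_def by auto

lemma Z_def': "Z = zof ` Y"
proof
  show "Z \<subseteq> zof ` Y"
  proof
    fix c assume "c \<in> Z"
    then obtain y where y: "y \<in> Y" "qd y = bvec c" unfolding QE_Z_def by blast
    have "bvec c = (bvec (zof y) :: 'a \<Rightarrow> 'k)" using zof(2)[OF y(1)] y(2) by simp
    then have "c = zof y" by (rule bvec_inj)
    then show "c \<in> zof ` Y" using y by blast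
  qed
  show "zof ` Y \<subseteq> Z"
  proof
    fix c assume "c \<in> zof ` Y"
    then obtain y where y: "y \<in> Y" "c = zof y" by blast
    have "qd y = bvec c" using zof(2)[OF y(1)] y(2) by simp
    then show "c \<in> Z" unfolding QE_Z_def using y(1) by blast
  qed
qed

lemma zof_inj: assumes "y1 \<in> Y" "y2 \<in> Y" "zof y1 = zof y2" shows "y1 = y2"
proof -
  have b: "y1 \<in> A - B" "y2 \<in> A - B" using assms YAB by auto
  have e: "qd y1 = qd y2" using zof(2)[OF assms(1)] zof(2)[OF assms(2)] assms(3) by simp
  have nz: "qd y1 \<noteq> (\<lambda>_. 0)" using assms unfolding QE_Y_def by auto
  show ?thesis using elQ_parts(2) b e nz by blast
qed

lemma ZAB: "Z \<subseteq> A - B" using Z_def' zof(1) by auto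

definition yof :: "'a \<Rightarrow> 'a" where "yof z = (SOME y. y \<in> Y \<and> zof y = z)"

lemma yof: assumes "z \<in> Z" shows "yof z \<in> Y" "zof (yof z) = z"
proof -
  have "\<exists>y. y \<in> Y \<and> zof y = z" using assms Z_def' by auto
  then have "yof z \<in> Y \<and> zof (yof z) = z" unfolding yof_def by (rule someI_ex)
  then show "yof z \<in> Y" "zof (yof z) = z" by auto
qed

lemma yof_zof: "y \<in> Y \<Longrightarrow> yof (zof y) = y"
proof -
  assume y: "y \<in> Y"
  have z: "zof y \<in> Z" using y Z_def' by blast
  show ?thesis using zof_inj[OF yof(1)[OF z] y yof(2)[OF z]] .
qed

lemma qdZ: assumes z: "z \<in> Z" shows "qd z = (\<lambda>_. 0)"
proof (rule ext)
  fix c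
  define y where "y = yof z"
  have y: "y \<in> Y" "qd y = bvec z" using yof[OF z] zof(2) y_def by auto
  have yAB: "y \<in> A - B" using y YAB by auto
  have zAB: "z \<in> A - B" using z ZAB by auto
  have "0 = (\<Sum>b\<in>A - B. qd y b * qd b c)" using elQ_parts(3) yAB by simp
  also have "\<dots> = qd y z * qd z c"
    by (rule sum_single) (use fin zAB y(2) in \<open>auto simp: bvec_def\<close>)
  also have "\<dots> = qd z c" using y(2) by (simp add: bvec_def)
  finally show "qd z c = 0" by simp
qed

lemma YZ_disj: "Y \<inter> Z = {}"
proof -
  have "z \<notin> Y" if "z \<in> Z" for z
  proof
    assume "z \<in> Y"
    then have "qd z \<noteq> (\<lambda>_. 0)" unfolding QE_Y_def by blast
    then show False using qdZ[OF that] by simp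
  qed
  then show ?thesis by blast
qed

lemma X_def': "X = (A - B) - (Y \<union> Z)" unfolding QE_X_def by simp

lemma notY: "a \<in> A - B \<Longrightarrow> a \<notin> Y \<Longrightarrow> qd a = (\<lambda>_. 0)"
  unfolding QE_Y_def by blast

definition CC :: "'a \<Rightarrow> 'a \<Rightarrow> 'k" where "CC a = (\<lambda>c. if c \<in> B then d a c else 0)"

lemma CC_B: "c \<notin> B \<Longrightarrow> CC a c = 0" unfolding CC_def by simp

lemma d_split: assumes a: "a \<in> A - B" shows "d a c = qd a c + CC a c"
proof (cases "c \<in> B")
  case True then show ?thesis unfolding CC_def qd_def' by simp
next
  case False
  show ?thesis
  proof (cases "c \<in> A")
    case True then show ?thesis using False a unfolding CC_def qd_def' by simp
  next
    case cA: False
    then have "d a c = 0" using dsupp by blast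
    then show ?thesis using False cA unfolding CC_def qd_def' by simp
  qed
qed

lemma linCC: "lin A d (CC a) c = (if c \<in> R then CC a (qof c) else 0)"
  by (rule linB) (rule CC_B)

lemma sq_split: assumes a: "a \<in> A - B"
  shows "(if a \<in> Y then d (zof a) c else 0) + lin A d (CC a) c = 0"
proof -
  have aA: "a \<in> A" using a by auto
  have "0 = (\<Sum>b\<in>A. d a b * d b c)" using dsq[OF aA] by simp
  also have "\<dots> = (\<Sum>b\<in>A. qd a b * d b c + CC a b * d b c)"
    using d_split[OF a] by (simp add: algebra_simps)
  also have "\<dots> = (\<Sum>b\<in>A. qd a b * d b c) + lin A d (CC a) c"
    unfolding lin_def by (simp add: sum.distrib)
  also have "(\<Sum>b\<in>A. qd a b * d b c) = (if a \<in> Y then d (zof a) c else 0)"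
  proof (cases "a \<in> Y")
    case True
    have zA: "zof a \<in> A" using zof(1)[OF True] by auto
    have "(\<Sum>b\<in>A. qd a b * d b c) = qd a (zof a) * d (zof a) c"
      by (rule sum_single[OF fin zA]) (simp add: zof(2)[OF True] bvec_def)
    then show ?thesis using True zof(2)[OF True] by (simp add: bvec_def)
  next
    case False
    then show ?thesis using notY[OF a False] by simp
  qed
  finally show ?thesis by simp
qed

lemma CQ0: assumes a: "a \<in> A - B" "a \<notin> Y" and q: "q \<in> Q" shows "d a q = 0"
proof -
  have r: "img q \<in> R" using q R_def' by blast
  have "lin A d (CC a) (img q) = 0" using sq_split[OF a(1), of "img q"] a(2) by simp
  then have "CC a q = 0" using linCC[of a "img q"] r qof_img[OF q] by simp
  then show ?thesis using q QB unfolding CC_def by auto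
qed

lemma Cz: assumes z: "z \<in> Z" shows "CC z c = (if c \<in> R then - CC (yof z) (qof c) else 0)"
proof -
  define y where "y = yof z"
  have y: "y \<in> Y" "zof y = z" using yof[OF z] y_def by auto
  have yAB: "y \<in> A - B" using y YAB by auto
  have "d z c + lin A d (CC y) c = 0" using sq_split[OF yAB, of c] y by simp
  then have dz: "d z c = - (if c \<in> R then CC y (qof c) else 0)" using linCC[of y c] by (simp add: eq_neg_iff_add_eq_0)
  show ?thesis
  proof (cases "c \<in> B")
    case True then show ?thesis using dz y_def unfolding CC_def by simp
  next
    case False then show ?thesis using RB unfolding CC_def by auto
  qed
qed

lemma CyQ: assumes y: "y \<in> Y" and q: "q \<in> Q" shows "CC y q = - CC (zof y) (img q)"
proof -
  have z: "zof y \<in> Z" using y Z_def' by blast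
  have r: "img q \<in> R" using q R_def' by blast
  show ?thesis using Cz[OF z, of "img q"] r yof_zof[OF y] qof_img[OF q] by simp
qed

end


lemma lin_add:
  "lin A M (\<lambda>c. u c + w c) = (\<lambda>c. lin A M u c + lin A M w c)"
  unfolding lin_def by (simp add: sum.distrib algebra_simps)

context qe begin

definition SS :: "('a \<Rightarrow> 'k) \<Rightarrow> 'a \<Rightarrow> 'k" where
  "SS w = (\<lambda>c. if c \<in> Q then w (img c) else 0)"
definition PiP :: "('a \<Rightarrow> 'k) \<Rightarrow> 'a \<Rightarrow> 'k" where
  "PiP w = (\<lambda>c. if c \<in> P then w c else 0)"
definition Hz :: "'a \<Rightarrow> 'a \<Rightarrow> 'k" where
  "Hz z = (\<lambda>c. - SS (CC z) c + PiP (CC (yof z)) c)"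
definition HH :: "'a \<Rightarrow> 'a \<Rightarrow> 'k" where
  "HH a = (if a \<in> X then (\<lambda>c. - SS (CC a) c) else if a \<in> Z then Hz a
           else if a \<in> Y then SS (\<lambda>c. Hz (zof a) c - CC a c) else (\<lambda>_. 0))"
definition del :: "'a \<Rightarrow> 'a \<Rightarrow> 'k" where
  "del a c = (if a \<in> A \<and> c = a then 1 else 0)"
definition TT :: "'a \<Rightarrow> 'a \<Rightarrow> 'k" where
  "TT a c = del a c - HH a c"
definition TI :: "'a \<Rightarrow> 'a \<Rightarrow> 'k" where
  "TI a c = del a c + HH a c"
definition D1 :: "'a \<Rightarrow> 'a \<Rightarrow> 'k" where
  "D1 a c = (if a \<in> B then d a c else if a \<in> X then (if c \<in> P then d a c else 0) else qd a c)"

lemma XAB: "X \<subseteq> A - B" unfolding QE_X_def by auto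

lemma SS_Q: "c \<notin> Q \<Longrightarrow> SS w c = 0" unfolding SS_def by simp
lemma PiP_P: "c \<notin> P \<Longrightarrow> PiP w c = 0" unfolding PiP_def by simp

lemma HH_supp: assumes "HH a c \<noteq> 0" shows "a \<in> A - B" "c \<in> B"
proof -
  have "a \<in> X \<or> a \<in> Y \<or> a \<in> Z" using assms unfolding HH_def by (auto split: if_splits)
  then show "a \<in> A - B" using XAB YAB ZAB by blast
  have "c \<in> Q \<or> c \<in> P" using assms unfolding HH_def Hz_def SS_def PiP_def
    by (auto split: if_splits)
  then show "c \<in> B" using QB PB by blast
qed

lemma HH_zero: "a \<notin> A - B \<Longrightarrow> HH a c = 0" using HH_supp by blast

lemma linSS: "lin A d (SS w) c = (if c \<in> R then w c else 0)"
proof -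
  have "lin A d (SS w) c = (if c \<in> R then SS w (qof c) else 0)"
    by (rule linB) (use SS_Q QB in blast)
  then show ?thesis using qof by (simp add: SS_def)
qed

lemma linPiP: "lin A d (PiP w) c = 0"
proof -
  have "lin A d (PiP w) c = (if c \<in> R then PiP w (qof c) else 0)"
    by (rule linB) (use PiP_P PB in blast)
  moreover have "c \<in> R \<Longrightarrow> qof c \<notin> P" unfolding P_def' using qof(1) by blast
  ultimately show ?thesis using PiP_P by simp
qed

lemma linHz: "lin A d (Hz z) c = - (if c \<in> R then CC z c else 0)"
  unfolding Hz_def lin_add lin_neg linSS linPiP by simp

lemma BPQR: "c \<in> B \<Longrightarrow> c \<in> P \<or> c \<in> Q \<or> c \<in> R" unfolding P_def' by blast
lemma PR: "c \<in> P \<Longrightarrow> c \<notin> R" "c \<in> P \<Longrightarrow> c \<notin> Q" unfolding P_def' by blast+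

lemma star:
  assumes a: "a \<in> A"
  shows "D1 a c = d a c + lin A d (HH a) c - (if a \<in> Y then HH (zof a) c else 0)"
proof (cases "a \<in> B")
  case True
  have "HH a = (\<lambda>_. 0)"
  proof (rule ext)
    fix c show "HH a c = 0" using HH_zero True by blast
  qed
  moreover have "a \<notin> Y" using True YAB by blast
  ultimately show ?thesis using True by (simp add: D1_def lin_zero)
next
  case nB: False
  then have aAB: "a \<in> A - B" using a by blast
  then have cases: "a \<in> X \<or> a \<in> Y \<or> a \<in> Z" unfolding X_def' by blast
  have dac: "d a c = qd a c + CC a c" by (rule d_split[OF aAB])
  show ?thesis
  proof (cases "a \<in> X")
    case aX: True
    then have nY: "a \<notin> Y" "a \<notin> Z" unfolding X_def' by blast+
    have qd0: "qd a c = 0" using notY[OF aAB nY(1)] by simp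
    have "HH a = (\<lambda>c. - SS (CC a) c)" using aX by (simp add: HH_def)
    then have lH: "lin A d (HH a) c = - (if c \<in> R then CC a c else 0)"
      by (simp add: lin_neg linSS)
    have D1a: "D1 a c = (if c \<in> P then d a c else 0)" using aX nB unfolding D1_def by simp
    show ?thesis
    proof (cases "c \<in> B")
      case False
      then have "c \<notin> P" "c \<notin> R" using PB RB by auto
      then show ?thesis using D1a lH dac qd0 nY CC_B[OF False] by simp
    next
      case cB: True
      have CCac: "CC a c = d a c" using cB unfolding CC_def by simp
      consider "c \<in> P" | "c \<in> Q" | "c \<in> R" using BPQR[OF cB] by blast
      then show ?thesis
      proof cases
        case 1 then show ?thesis using D1a lH CCac nY PR(1)[OF 1] by simp
      next
        case 2
        have "d a c = 0" using CQ0[OF aAB nY(1) 2] .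
        moreover have "c \<notin> P" "c \<notin> R" using 2 PR(2) QR_disj by blast+
        ultimately show ?thesis using D1a lH CCac nY by simp
      next
        case 3
        then have "c \<notin> P" using PR by blast
        then show ?thesis using D1a lH CCac nY 3 by simp
      qed
    qed
  next
    case nX: False
    show ?thesis
    proof (cases "a \<in> Z")
      case aZ: True
      then have nY: "a \<notin> Y" using YZ_disj by blast
      have D1a: "D1 a c = 0" using nB nX qdZ[OF aZ] unfolding D1_def by simp
      have "HH a = Hz a" using aZ nX by (simp add: HH_def)
      then have lH: "lin A d (HH a) c = - (if c \<in> R then CC a c else 0)"
        by (simp add: linHz)
      have CR: "c \<notin> R \<Longrightarrow> CC a c = 0" using Cz[OF aZ, of c] by simp
      show ?thesis using D1a lH dac qdZ[OF aZ] nY CR by (cases "c \<in> R") simp_all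
    next
      case nZ: False
      then have aY: "a \<in> Y" using cases nX by blast
      define z where "z = zof a"
      have z1: "z \<in> Z" unfolding Z_def' z_def using aY by blast
      have z: "z \<in> Z" "yof z = a" using z1 yof_zof[OF aY] z_def by simp_all
      have D1a: "D1 a c = qd a c" using nB nX unfolding D1_def by simp
      have "HH a = SS (\<lambda>c. Hz z c - CC a c)" using aY nX nZ by (simp add: HH_def z_def)
      then have lH: "lin A d (HH a) c = (if c \<in> R then Hz z c - CC a c else 0)"
        by (simp add: linSS)
      have "z \<notin> X" unfolding X_def' using z(1) by blast
      then have HHz: "HH z = Hz z" using z(1) by (simp add: HH_def)
      have key: "CC a c = Hz z c" if nR: "c \<notin> R"
      proof (cases "c \<in> B")
        case False
        then have "c \<notin> Q" "c \<notin> P" using QB PB by auto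
        then show ?thesis using False CC_B unfolding Hz_def SS_def PiP_def by simp
      next
        case cB: True
        then consider "c \<in> P" | "c \<in> Q" using BPQR nR by blast
        then show ?thesis
        proof cases
          case 1 then show ?thesis using PR(2)[OF 1] z(2) unfolding Hz_def SS_def PiP_def by simp
        next
          case 2
          have "CC a c = - CC z (img c)" using CyQ[OF aY 2] z_def by simp
          moreover have "c \<notin> P" using 2 PR(2) by blast
          ultimately show ?thesis using 2 unfolding Hz_def SS_def PiP_def by simp
        qed
      qed
      show ?thesis
        using D1a lH dac aY HHz key z_def by (cases "c \<in> R") simp_all
    qed
  qed
qed

end


lemma lin_tri:
  assumes tri: "\<And>a c. M a c \<noteq> 0 \<Longrightarrow> c \<in> A \<and> (c = a \<or> (c, a) \<in> r)"
    and tr: "trans r" and v: "v \<in> init_span A r a"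
  shows "lin A M v \<in> init_span A r a"
  unfolding init_span_def
proof
  show "lin A M v \<in> EV A" by (rule lin_EV) (use tri in blast)
  show "lin A M v \<in> supp_in {c \<in> A. c = a \<or> (c, a) \<in> r}"
    unfolding supp_in_def
  proof (rule CollectI, intro allI impI)
    fix c assume c: "c \<notin> {c \<in> A. c = a \<or> (c, a) \<in> r}"
    have vb0: "v b * M b c = 0" for b
    proof (rule ccontr)
      assume "v b * M b c \<noteq> 0"
      then have vb: "v b \<noteq> 0" and Mb: "M b c \<noteq> 0" by auto
      have "b = a \<or> (b, a) \<in> r" using v vb unfolding init_span_def supp_in_def by blast
      moreover have "c \<in> A" "c = b \<or> (c, b) \<in> r" using tri[OF Mb] by auto
      ultimately show False using c tr unfolding trans_def by blast
    qed
    then have "(\<Sum>b\<in>A. v b * M b c) = 0" by (simp add: sum.neutral)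
    then show "lin A M v c = 0" by (simp add: lin_def)
  qed
qed

context qe begin

abbreviation "r' \<equiv> reorder A B r"

lemma sum_del: "a \<in> A \<Longrightarrow> (\<Sum>b\<in>A. del a b * f b) = f a"
  using sum_single[OF fin, of a "\<lambda>b. del a b * f b"] by (simp add: del_def)

lemma sum_del2: "(\<Sum>b\<in>A. f b * del b c) = (if c \<in> A then f c else 0)"
proof (cases "c \<in> A")
  case True
  then show ?thesis using sum_single[OF fin True, of "\<lambda>b. f b * del b c"] by (simp add: del_def)
next
  case False
  then have "f b * del b c = 0" if "b \<in> A" for b using that by (auto simp: del_def)
  then show ?thesis using False by (simp add: sum.neutral)
qed

lemma HH_c: "HH a c \<noteq> 0 \<Longrightarrow> c \<in> A" using HH_supp BA by blast

lemma HH_B: "b \<in> B \<Longrightarrow> HH b c = 0" using HH_supp by blast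

lemma sumHH: "(\<Sum>b\<in>A. HH a b * d b c) = lin A d (HH a) c" unfolding lin_def by simp

lemma sum_HD1: "(\<Sum>b\<in>A. HH a b * D1 b c) = lin A d (HH a) c"
  unfolding lin_def
proof (rule sum.cong[OF refl])
  fix b assume "b \<in> A"
  show "HH a b * D1 b c = HH a b * d b c"
  proof (cases "HH a b = 0")
    case False
    then have "b \<in> B" using HH_supp by blast
    then show ?thesis unfolding D1_def by simp
  qed simp
qed

lemma dH: assumes a: "a \<in> A"
  shows "(\<Sum>b\<in>A. d a b * HH b c) = (if a \<in> Y then HH (zof a) c else 0)"
proof (cases "a \<in> Y")
  case aY: True
  have aAB: "a \<in> A - B" using aY YAB by blast
  have zAB: "zof a \<in> A - B" using zof(1)[OF aY] .
  then have zA: "zof a \<in> A" by blast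
  have dq: "qd a = bvec (zof a)" using zof(2)[OF aY] .
  have "(\<Sum>b\<in>A. d a b * HH b c) = d a (zof a) * HH (zof a) c"
  proof (rule sum_single[OF fin zA])
    fix b assume b: "b \<in> A" "b \<noteq> zof a"
    show "d a b * HH b c = 0"
    proof (cases "b \<in> B")
      case True then show ?thesis using HH_B by simp
    next
      case False
      have "d a b = qd a b + CC a b" using d_split[OF aAB] .
      also have "\<dots> = 0" using dq b False CC_B by (simp add: bvec_def)
      finally show ?thesis by simp
    qed
  qed
  also have "d a (zof a) = 1"
  proof -
    have "d a (zof a) = qd a (zof a) + CC a (zof a)" using d_split[OF aAB] .
    then show ?thesis using dq zAB CC_B by (simp add: bvec_def)
  qed
  finally show ?thesis using aY by simp
next
  case nY: False
  have "d a b * HH b c = 0" if b: "b \<in> A" for b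
  proof (cases "b \<in> B")
    case True then show ?thesis using HH_B by simp
  next
    case bB: False
    show ?thesis
    proof (cases "a \<in> B")
      case True
      then have "d a b = 0" using Binv bB by blast
      then show ?thesis by simp
    next
      case False
      then have aAB: "a \<in> A - B" using a by blast
      have "d a b = qd a b + CC a b" using d_split[OF aAB] .
      also have "\<dots> = 0" using notY[OF aAB nY] CC_B[OF bB] by simp
      finally show ?thesis by simp
    qed
  qed
  then show ?thesis using nY by (simp add: sum.neutral)
qed

lemma row: assumes a: "a \<in> A"
  shows "(\<Sum>b\<in>A. TT a b * D1 b c) = (\<Sum>b\<in>A. d a b * TT b c)"
proof -
  have "(\<Sum>b\<in>A. TT a b * D1 b c) = (\<Sum>b\<in>A. del a b * D1 b c) - (\<Sum>b\<in>A. HH a b * D1 b c)"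
    unfolding TT_def by (simp add: algebra_simps sum_subtractf)
  also have "\<dots> = D1 a c - lin A d (HH a) c" using sum_del[OF a] sum_HD1 by simp
  finally have L: "(\<Sum>b\<in>A. TT a b * D1 b c) = D1 a c - lin A d (HH a) c" .
  have "(\<Sum>b\<in>A. d a b * TT b c) = (\<Sum>b\<in>A. d a b * del b c) - (\<Sum>b\<in>A. d a b * HH b c)"
    unfolding TT_def by (simp add: algebra_simps sum_subtractf)
  also have "(\<Sum>b\<in>A. d a b * del b c) = d a c"
    using sum_del2[of "d a" c] dsupp by auto
  finally have Rr: "(\<Sum>b\<in>A. d a b * TT b c) = d a c - (if a \<in> Y then HH (zof a) c else 0)"
    using dH[OF a] by simp
  show ?thesis using L Rr star[OF a, of c] by simp
qed

lemma conj: "\<forall>v\<in>EV A. lin A D1 (lin A TT v) = lin A TT (lin A d v)"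
proof
  fix v :: "'a \<Rightarrow> 'k" assume "v \<in> EV A"
  show "lin A D1 (lin A TT v) = lin A TT (lin A d v)"
    unfolding lin_comp[OF fin] by (rule lin_rows_cong) (rule row)
qed

end


context qe begin

definition hom :: "int \<Rightarrow> ('a \<Rightarrow> 'k) \<Rightarrow> bool" where
  "hom k w \<longleftrightarrow> (\<forall>c. w c \<noteq> 0 \<longrightarrow> deg c = k)"

lemma hom_CC: "hom (deg a - 1) (CC a)"
  unfolding hom_def CC_def using dsupp by auto

lemma hom_SS: assumes "hom k w" shows "hom (k + 1) (SS w)"
  unfolding hom_def
proof (intro allI impI)
  fix c assume "SS w c \<noteq> 0"
  then have c: "c \<in> Q" "w (img c) \<noteq> 0" unfolding SS_def by (auto split: if_splits)
  have "deg (img c) = k" using assms c(2) unfolding hom_def by blast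
  moreover have "d c (img c) \<noteq> 0" using img(2)[OF c(1)] by (simp add: bvec_def)
  then have "deg (img c) = deg c - 1" using dsupp by blast
  ultimately show "deg c = k + 1" by simp
qed

lemma hom_PiP: "hom k w \<Longrightarrow> hom k (PiP w)"
  unfolding hom_def PiP_def by auto

lemma hom_neg: "hom k w \<Longrightarrow> hom k (\<lambda>c. - w c)"
  unfolding hom_def by auto

lemma hom_add: "hom k u \<Longrightarrow> hom k w \<Longrightarrow> hom k (\<lambda>c. u c + w c)"
  unfolding hom_def by (metis add.right_neutral add_0)

lemma hom_diff: "hom k u \<Longrightarrow> hom k w \<Longrightarrow> hom k (\<lambda>c. u c - w c)"
  unfolding hom_def by (metis diff_zero diff_0 neg_0_equal_iff_equal)

lemma deg_zof: assumes y: "y \<in> Y" shows "deg (zof y) = deg y - 1"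
proof -
  have yAB: "y \<in> A - B" using y YAB by blast
  have "qd y (zof y) = 1" using zof(2)[OF y] by (simp add: bvec_def)
  then have "d y (zof y) \<noteq> 0" unfolding qd_def' by (auto split: if_splits)
  then show ?thesis using dsupp by blast
qed

lemma hom_Hz: assumes z: "z \<in> Z" shows "hom (deg z) (Hz z)"
proof -
  have y: "yof z \<in> Y" "zof (yof z) = z" using yof[OF z] by auto
  have dz: "deg z = deg (yof z) - 1" using deg_zof[OF y(1)] y(2) by simp
  have "hom (deg z - 1 + 1) (SS (CC z))" by (rule hom_SS[OF hom_CC])
  then have h1: "hom (deg z) (\<lambda>c. - SS (CC z) c)" by (simp add: hom_neg)
  have h2: "hom (deg z) (PiP (CC (yof z)))" using hom_PiP[OF hom_CC[of "yof z"]] dz by simp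
  show ?thesis unfolding Hz_def by (rule hom_add[OF h1 h2])
qed

lemma hom_HH: "hom (deg a) (HH a)"
proof (cases "a \<in> X")
  case True
  have "hom (deg a - 1 + 1) (SS (CC a))" by (rule hom_SS[OF hom_CC])
  then show ?thesis using True by (simp add: HH_def hom_neg)
next
  case nX: False
  show ?thesis
  proof (cases "a \<in> Z")
    case True then show ?thesis using nX hom_Hz by (simp add: HH_def)
  next
    case nZ: False
    show ?thesis
    proof (cases "a \<in> Y")
      case aY: True
      have z: "zof a \<in> Z" unfolding Z_def' using aY by blast
      have dz: "deg (zof a) = deg a - 1" using deg_zof[OF aY] .
      have h: "hom (deg a - 1) (Hz (zof a))" using hom_Hz[OF z] dz by simp
      have "hom (deg a - 1) (\<lambda>c. Hz (zof a) c - CC a c)"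
        by (rule hom_diff[OF h hom_CC])
      then have "hom (deg a - 1 + 1) (SS (\<lambda>c. Hz (zof a) c - CC a c))" by (rule hom_SS)
      then show ?thesis using nX nZ aY by (simp add: HH_def)
    next
      case False then show ?thesis using nX nZ by (simp add: HH_def hom_def)
    qed
  qed
qed

lemma HH_deg: "HH a c \<noteq> 0 \<Longrightarrow> deg c = deg a"
  using hom_HH unfolding hom_def by blast

lemma HH_r': assumes "HH a c \<noteq> 0" shows "(c, a) \<in> r'"
proof -
  have "a \<in> A - B" "c \<in> B" using HH_supp assms by auto
  then show ?thesis unfolding reorder_def using BA by auto
qed

lemma TT_supp: assumes "TT a c \<noteq> 0"
  shows "a \<in> A \<and> c \<in> A \<and> deg c = deg a \<and> (c = a \<or> (c, a) \<in> r')"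
proof (cases "HH a c = 0")
  case True
  then have "del a c \<noteq> 0" using assms unfolding TT_def by simp
  then show ?thesis unfolding del_def by (auto split: if_splits)
next
  case False
  have "a \<in> A" "c \<in> A" using HH_supp[OF False] BA by auto
  then show ?thesis using HH_deg[OF False] HH_r'[OF False] by blast
qed

lemma TI_supp: assumes "TI a c \<noteq> 0"
  shows "a \<in> A \<and> c \<in> A \<and> deg c = deg a \<and> (c = a \<or> (c, a) \<in> r')"
proof (cases "HH a c = 0")
  case True
  then have "del a c \<noteq> 0" using assms unfolding TI_def by simp
  then show ?thesis unfolding del_def by (auto split: if_splits)
next
  case False
  have "a \<in> A" "c \<in> A" using HH_supp[OF False] BA by auto
  then show ?thesis using HH_deg[OF False] HH_r'[OF False] by blast
qed

lemma sum_HH_TI: "(\<Sum>b\<in>A. HH a b * TI b c) = HH a c"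
proof -
  have "(\<Sum>b\<in>A. HH a b * TI b c) = (\<Sum>b\<in>A. HH a b * del b c)"
  proof (rule sum.cong[OF refl])
    fix b assume "b \<in> A"
    show "HH a b * TI b c = HH a b * del b c"
    proof (cases "HH a b = 0")
      case False
      then have "b \<in> B" using HH_supp by blast
      then show ?thesis unfolding TI_def using HH_B by simp
    qed simp
  qed
  also have "\<dots> = HH a c" using sum_del2[of "HH a" c] HH_c by auto
  finally show ?thesis .
qed

lemma sum_HH_TT: "(\<Sum>b\<in>A. HH a b * TT b c) = HH a c"
proof -
  have "(\<Sum>b\<in>A. HH a b * TT b c) = (\<Sum>b\<in>A. HH a b * del b c)"
  proof (rule sum.cong[OF refl])
    fix b assume "b \<in> A"
    show "HH a b * TT b c = HH a b * del b c"
    proof (cases "HH a b = 0")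
      case False
      then have "b \<in> B" using HH_supp by blast
      then show ?thesis unfolding TT_def using HH_B by simp
    qed simp
  qed
  also have "\<dots> = HH a c" using sum_del2[of "HH a" c] HH_c by auto
  finally show ?thesis .
qed

lemma prod1: assumes a: "a \<in> A" shows "(\<Sum>b\<in>A. TT a b * TI b c) = del a c"
proof -
  have "(\<Sum>b\<in>A. TT a b * TI b c) = (\<Sum>b\<in>A. del a b * TI b c) - (\<Sum>b\<in>A. HH a b * TI b c)"
    unfolding TT_def by (simp add: algebra_simps sum_subtractf)
  also have "\<dots> = TI a c - HH a c" using sum_del[OF a] sum_HH_TI by simp
  finally show ?thesis unfolding TI_def by simp
qed

lemma prod2: assumes a: "a \<in> A" shows "(\<Sum>b\<in>A. TI a b * TT b c) = del a c"
proof -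
  have "(\<Sum>b\<in>A. TI a b * TT b c) = (\<Sum>b\<in>A. del a b * TT b c) + (\<Sum>b\<in>A. HH a b * TT b c)"
    unfolding TI_def by (simp add: algebra_simps sum.distrib)
  also have "\<dots> = TT a c + HH a c" using sum_del[OF a] sum_HH_TT by simp
  finally show ?thesis unfolding TT_def by simp
qed

lemma lin_del: assumes v: "v \<in> EV A" shows "lin A del v = v"
proof (rule ext)
  fix c
  have "lin A del v c = (if c \<in> A then v c else 0)" unfolding lin_def by (rule sum_del2)
  then show "lin A del v c = v c" using v unfolding EV_def by auto
qed

lemma TI_TT: "v \<in> EV A \<Longrightarrow> lin A TI (lin A TT v) = v"
  unfolding lin_comp[OF fin]
  by (subst lin_rows_cong[where N = del]) (simp_all add: prod1 lin_del)

lemma TT_TI: "v \<in> EV A \<Longrightarrow> lin A TT (lin A TI v) = v"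
  unfolding lin_comp[OF fin]
  by (subst lin_rows_cong[where N = del]) (simp_all add: prod2 lin_del)

lemma TT_EV: "lin A TT v \<in> EV A" by (rule lin_EV) (use TT_supp in blast)
lemma TI_EV: "lin A TI v \<in> EV A" by (rule lin_EV) (use TI_supp in blast)

lemma tr': "trans r'"
  unfolding trans_def reorder_def using tr unfolding trans_def by blast

lemma irr': "irrefl r'"
  unfolding irrefl_def reorder_def using irr unfolding irrefl_def by blast

lemma TT_aut: "graded_aut_initial A r' deg TT"
  unfolding graded_aut_initial_def
proof (intro conjI allI impI ballI)
  fix a c assume "TT a c \<noteq> 0"
  then show "a \<in> A" "c \<in> A" "deg c = deg a" using TT_supp by blast+
next
  show "bij_betw (lin A TT) (EV A) (EV A)"
    by (rule bij_betw_byWitness[where f' = "lin A TI"]) (use TI_TT TT_TI TT_EV TI_EV in auto)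
next
  fix a assume a: "a \<in> A"
  have t1: "lin A TT v \<in> init_span A r' a" if "v \<in> init_span A r' a" for v
    by (rule lin_tri[OF _ tr' that]) (use TT_supp in blast)
  have t2: "lin A TI v \<in> init_span A r' a" if "v \<in> init_span A r' a" for v
    by (rule lin_tri[OF _ tr' that]) (use TI_supp in blast)
  show "lin A TT ` init_span A r' a = init_span A r' a"
  proof
    show "lin A TT ` init_span A r' a \<subseteq> init_span A r' a" using t1 by blast
    show "init_span A r' a \<subseteq> lin A TT ` init_span A r' a"
    proof
      fix w :: "'a \<Rightarrow> 'k" assume w: "w \<in> init_span A r' a"
      then have "w = lin A TT (lin A TI w)" using TT_TI unfolding init_span_def by auto
      then show "w \<in> lin A TT ` init_span A r' a" using t2[OF w] by blast
    qed
  qed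
qed

end


context qe begin

lemma D1_d: "D1 a c \<noteq> 0 \<Longrightarrow> d a c \<noteq> 0"
  unfolding D1_def qd_def' by (auto split: if_splits)

lemma d_r': assumes "d a c \<noteq> 0" shows "(c, a) \<in> r'"
proof -
  have s: "a \<in> A" "c \<in> A" "(c, a) \<in> r" using dsupp[OF assms] by auto
  show ?thesis
  proof (cases "a \<in> B")
    case True
    then have "c \<in> B" using Binv assms by blast
    then show ?thesis using s True unfolding reorder_def by simp
  next
    case False
    then show ?thesis using s unfolding reorder_def by auto
  qed
qed

lemma X_single: assumes x: "x \<in> X" and p: "p \<in> P" "d x p \<noteq> 0"
  shows "D1 x = bvec p"
proof (rule ext)
  fix c
  have xB: "x \<notin> B" using x XAB by blast
  have D1x: "D1 x c = (if c \<in> P then d x c else 0)" using x xB unfolding D1_def by simp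
  have fin': "finite {p\<in>P. d x p \<noteq> 0}" using fin PB BA by (auto intro: finite_subset)
  have uniq: "\<forall>a1\<in>{p\<in>P. d x p \<noteq> 0}. \<forall>a2\<in>{p\<in>P. d x p \<noteq> 0}. a1 = a2"
    using qX1[OF x] card_le_Suc0_iff_eq[OF fin'] by simp
  show "D1 x c = bvec p c"
  proof (cases "c = p")
    case True then show ?thesis using D1x p qX2[OF x p] by (simp add: bvec_def)
  next
    case False
    have "c \<in> P \<Longrightarrow> d x c = 0" using uniq p False by blast
    then show ?thesis using D1x False by (simp add: bvec_def)
  qed
qed

lemma X_zero: assumes x: "x \<in> X" and np: "\<forall>p\<in>P. d x p = 0"
  shows "D1 x = (\<lambda>_. 0)"
proof (rule ext)
  fix c
  have xB: "x \<notin> B" using x XAB by blast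
  show "D1 x c = 0" using x xB np unfolding D1_def by simp
qed

lemma D1_target: assumes a: "a \<in> A" and t: "D1 a = bvec t"
  shows "(a \<in> Q \<and> t = img a) \<or> (a \<in> X \<and> t \<in> P \<and> d a t \<noteq> 0) \<or> (a \<in> Y \<and> t = zof a)"
proof -
  have t1: "D1 a t = 1" using t by (simp add: bvec_def)
  show ?thesis
  proof (cases "a \<in> B")
    case True
    then have "D1 a = d a" unfolding D1_def by auto
    then have dat: "d a = bvec t" using t by simp
    then have dat1: "d a t = 1" by (simp add: bvec_def)
    have "d a \<noteq> (\<lambda>_. 0)"
    proof
      assume "d a = (\<lambda>_. 0)" then show False using dat1 by simp
    qed
    then have aQ: "a \<in> Q" using True unfolding Q_def' by blast
    then have "bvec t = (bvec (img a) :: 'a \<Rightarrow> 'k)" using img(2) dat by simp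
    then have "t = img a" by (rule bvec_inj)
    then show ?thesis using aQ by simp
  next
    case nB: False
    then have aAB: "a \<in> A - B" using a by blast
    show ?thesis
    proof (cases "a \<in> X")
      case True
      have "D1 a t = (if t \<in> P then d a t else 0)" using True nB unfolding D1_def by simp
      then have "t \<in> P" "d a t \<noteq> 0" using t1 by (auto split: if_splits)
      then show ?thesis using True by blast
    next
      case nX: False
      have D1q: "D1 a = qd a" using nX nB unfolding D1_def by auto
      show ?thesis
      proof (cases "a \<in> Y")
        case True
        then have "bvec t = (bvec (zof a) :: 'a \<Rightarrow> 'k)" using zof(2) D1q t by simp
        then have "t = zof a" by (rule bvec_inj)
        then show ?thesis using True by simp
      next
        case False
        then have "qd a = (\<lambda>_. 0)" using notY[OF aAB] by blast
        then show ?thesis using D1q t1 by simp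
      qed
    qed
  qed
qed

lemma D1_form: assumes a: "a \<in> A" shows "D1 a = (\<lambda>_. 0) \<or> (\<exists>b\<in>A. D1 a = bvec b)"
proof (cases "D1 a = (\<lambda>_. 0)")
  case True then show ?thesis by (rule disjI1)
next
  case nz: False
  have "\<exists>t. D1 a = bvec t"
  proof (cases "a \<in> B")
    case True
    have e: "D1 a = restr B d a"
    proof (rule ext)
      fix c show "D1 a c = restr B d a c" using restr_eq[OF True] True by (simp add: D1_def)
    qed
    have "restr B d a = (\<lambda>_. 0) \<or> (\<exists>b\<in>B. restr B d a = bvec b)" using elB_parts(1) True by blast
    then show ?thesis
    proof
      assume "restr B d a = (\<lambda>_. 0)" then show ?thesis using e nz by simp
    next
      assume "\<exists>b\<in>B. restr B d a = bvec b"
      then obtain b where "restr B d a = bvec b" by blast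
      then show ?thesis using e by (intro exI[of _ b]) simp
    qed
  next
    case nB: False
    then have aAB: "a \<in> A - B" using a by blast
    show ?thesis
    proof (cases "a \<in> X")
      case True
      show ?thesis
      proof (cases "\<exists>p\<in>P. d a p \<noteq> 0")
        case True
        then obtain p where "p \<in> P" "d a p \<noteq> 0" by blast
        then have "D1 a = bvec p" using X_single[OF \<open>a \<in> X\<close>] by simp
        then show ?thesis by (rule exI)
      next
        case False
        then have "D1 a = (\<lambda>_. 0)" using X_zero[OF \<open>a \<in> X\<close>] by simp
        then show ?thesis using nz by simp
      qed
    next
      case nX: False
      have D1q: "D1 a = qd a"
      proof (rule ext)
        fix c show "D1 a c = qd a c" using nX nB by (simp add: D1_def)
      qed
      have "qd a = (\<lambda>_. 0) \<or> (\<exists>b\<in>A - B. qd a = bvec b)" using elQ_parts(1) aAB by blast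
      then show ?thesis
      proof
        assume "qd a = (\<lambda>_. 0)" then show ?thesis using D1q nz by simp
      next
        assume "\<exists>b\<in>A - B. qd a = bvec b"
        then obtain b where "qd a = bvec b" by blast
        then show ?thesis using D1q by (intro exI[of _ b]) simp
      qed
    qed
  qed
  then obtain t where t: "D1 a = bvec t" by (elim exE)
  have "D1 a t = 1" using t by (simp add: bvec_def)
  then have "d a t \<noteq> 0" using D1_d[of a t] by simp
  then have tA: "t \<in> A" using dsupp[of a t] by simp
  show ?thesis
  proof (rule disjI2)
    show "\<exists>b\<in>A. D1 a = bvec b"
    proof (rule bexI)
      show "D1 a = bvec t" by (rule t)
      show "t \<in> A" by (rule tA)
    qed
  qed
qed

lemma D1_target_zero: assumes a: "a \<in> A" and t: "D1 a = bvec t" shows "D1 t = (\<lambda>_. 0)"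
proof -
  consider "a \<in> Q" "t = img a" | "a \<in> X" "t \<in> P" | "a \<in> Y" "t = zof a"
    using D1_target[OF a t] by blast
  then show ?thesis
  proof cases
    case 1
    then have tR: "t \<in> R" using R_def' by blast
    then have "t \<in> B" using RB by blast
    then show ?thesis using dR[OF tR] unfolding D1_def by auto
  next
    case 2
    then have "t \<in> B" using PB by blast
    then show ?thesis using dP[OF 2(2)] unfolding D1_def by auto
  next
    case 3
    then have tZ: "t \<in> Z" unfolding Z_def' by blast
    then have "t \<notin> B" "t \<notin> X" using ZAB unfolding X_def' by blast+
    then show ?thesis using qdZ[OF tZ] unfolding D1_def by auto
  qed
qed

lemma D1_sq: assumes a: "a \<in> A" shows "(\<Sum>b\<in>A. D1 a b * D1 b c) = 0"
proof (cases "D1 a = (\<lambda>_. 0)")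
  case True then show ?thesis by simp
next
  case False
  then obtain t where t: "t \<in> A" "D1 a = bvec t" using D1_form[OF a] by blast
  have "(\<Sum>b\<in>A. D1 a b * D1 b c) = D1 a t * D1 t c"
    by (rule sum_single[OF fin t(1)]) (simp add: t(2) bvec_def)
  also have "\<dots> = 0" using D1_target_zero[OF a t(2)] by simp
  finally show ?thesis .
qed

lemma D1_inj: assumes a1: "a1 \<in> A" and a2: "a2 \<in> A" and nz: "D1 a1 \<noteq> (\<lambda>_. 0)"
  and eq: "D1 a1 = D1 a2" shows "a1 = a2"
proof -
  obtain t where t: "t \<in> A" "D1 a1 = bvec t" using D1_form[OF a1] nz by blast
  have t2: "D1 a2 = bvec t" using t eq by simp
  have c1: "(a1 \<in> Q \<and> t = img a1) \<or> (a1 \<in> X \<and> t \<in> P \<and> d a1 t \<noteq> 0) \<or> (a1 \<in> Y \<and> t = zof a1)"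
    using D1_target[OF a1 t(2)] .
  have c2: "(a2 \<in> Q \<and> t = img a2) \<or> (a2 \<in> X \<and> t \<in> P \<and> d a2 t \<noteq> 0) \<or> (a2 \<in> Y \<and> t = zof a2)"
    using D1_target[OF a2 t2] .
  have imgR: "q \<in> Q \<Longrightarrow> img q \<in> R" for q using R_def' by blast
  have imgB: "q \<in> Q \<Longrightarrow> img q \<in> B" for q using img(1) by blast
  have zofB: "y \<in> Y \<Longrightarrow> zof y \<notin> B" for y using zof(1) by blast
  have Xuniq: "x1 = x2" if "x1 \<in> X" "x2 \<in> X" "d x1 t \<noteq> 0" "d x2 t \<noteq> 0" "t \<in> P" for x1 x2
  proof -
    have fin': "finite {x\<in>X. d x t \<noteq> 0}" using fin XAB by (auto intro: finite_subset)
    have "\<forall>a1\<in>{x\<in>X. d x t \<noteq> 0}. \<forall>a2\<in>{x\<in>X. d x t \<noteq> 0}. a1 = a2"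
      using qP[OF that(5)] card_le_Suc0_iff_eq[OF fin'] by simp
    then show ?thesis using that by blast
  qed
  from c1 show ?thesis
  proof (elim disjE conjE)
    assume q1: "a1 \<in> Q" "t = img a1"
    from c2 show ?thesis
    proof (elim disjE conjE)
      assume "a2 \<in> Q" "t = img a2"
      then show ?thesis using img_inj[OF q1(1)] q1(2) by simp
    next
      assume "a2 \<in> X" "t \<in> P" "d a2 t \<noteq> 0"
      then show ?thesis using imgR[OF q1(1)] q1(2) PR(1) by simp
    next
      assume "a2 \<in> Y" "t = zof a2"
      then show ?thesis using imgB[OF q1(1)] q1(2) zofB by simp
    qed
  next
    assume x1: "a1 \<in> X" "t \<in> P" "d a1 t \<noteq> 0"
    from c2 show ?thesis
    proof (elim disjE conjE)
      assume a2Q: "a2 \<in> Q" "t = img a2"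
      have "t \<in> R" using imgR[OF a2Q(1)] a2Q(2) by simp
      then show ?thesis using PR(1)[OF x1(2)] by simp
    next
      assume "a2 \<in> X" "t \<in> P" "d a2 t \<noteq> 0"
      then show ?thesis using Xuniq x1 by simp
    next
      assume "a2 \<in> Y" "t = zof a2"
      then show ?thesis using zofB x1(2) PB by auto
    qed
  next
    assume y1: "a1 \<in> Y" "t = zof a1"
    from c2 show ?thesis
    proof (elim disjE conjE)
      assume a2Q: "a2 \<in> Q" "t = img a2"
      have "t \<in> B" using imgB[OF a2Q(1)] a2Q(2) by simp
      then show ?thesis using zofB[OF y1(1)] y1(2) by simp
    next
      assume "a2 \<in> X" "t \<in> P" "d a2 t \<noteq> 0"
      then show ?thesis using y1 zofB PB by auto
    next
      assume "a2 \<in> Y" "t = zof a2"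
      then show ?thesis using zof_inj[OF y1(1)] y1(2) by simp
    qed
  qed
qed

lemma D1_elem: "elementary A r' deg D1"
  unfolding elementary_def M_differential_def
proof (intro conjI allI impI ballI)
  fix a c assume "D1 a c \<noteq> 0"
  then have dac: "d a c \<noteq> 0" by (rule D1_d)
  then show "a \<in> A" "c \<in> A" "deg c = deg a - 1" using dsupp by blast+
  show "(c, a) \<in> r'" using d_r'[OF dac] .
next
  fix a c assume "a \<in> A"
  then show "(\<Sum>b\<in>A. D1 a b * D1 b c) = 0" by (rule D1_sq)
next
  fix a assume "a \<in> A"
  then show "D1 a = (\<lambda>_. 0) \<or> (\<exists>b\<in>A. D1 a = bvec b)" by (rule D1_form)
next
  fix a1 a2 assume "a1 \<in> A" "a2 \<in> A" "D1 a1 \<noteq> (\<lambda>_. 0)" "D1 a1 = D1 a2"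
  then show "a1 = a2" by (rule D1_inj)
qed

lemma baran: "barannikov A r' deg d = D1"
  unfolding barannikov_def
proof (rule the_equality)
  show "elementary A r' deg D1 \<and> (\<exists>T. graded_aut_initial A r' deg T \<and>
        (\<forall>v\<in>EV A. lin A D1 (lin A T v) = lin A T (lin A d v)))"
    using D1_elem TT_aut conj by blast
next
  fix e assume e: "elementary A r' deg e \<and> (\<exists>T. graded_aut_initial A r' deg T \<and>
        (\<forall>v\<in>EV A. lin A e (lin A T v) = lin A T (lin A d v)))"
  then obtain T where T: "graded_aut_initial A r' deg T"
    "\<forall>v\<in>EV A. lin A e (lin A T v) = lin A T (lin A d v)" by blast
  have eA: "d b c \<noteq> 0 \<Longrightarrow> c \<in> A" for b c using dsupp by blast
  have el: "elementary A r' deg e" using e by (rule conjunct1)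
  show "e = D1"
    by (rule uniqueness[OF fin tr' irr' eA el T(1) T(2) D1_elem TT_aut conj])
qed

end


context qe begin

lemma finB: "finite B" using fin BA by (rule finite_subset[rotated])

lemma p_notR: assumes pH: "p \<in> H_ess A B r d" shows "p \<notin> R"
proof
  assume pR: "p \<in> R"
  have pB: "p \<in> B" using pR RB by blast
  define dB where "dB = restr B d"
  define S1 where "S1 = {c\<in>B. c = p \<or> (c, p) \<in> r}"
  define S0 where "S0 = {c\<in>B. (c, p) \<in> r}"
  define q where "q = qof p"
  have qQ: "q \<in> Q" and imgq: "img q = p" using qof[OF pR] q_def by auto
  have qB: "q \<in> B" using qQ QB by blast
  have dBq: "lin B dB (bvec q) = bvec p"
    using lin_bvec[OF finB qB, of dB] restr_eq[OF qB] img(2)[OF qQ] imgq dB_def by simp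
  have dBp: "lin B dB (bvec p) = (\<lambda>_. 0)"
    using lin_bvec[OF finB pB, of dB] restr_eq[OF pB] dR[OF pR] dB_def by simp
  have sub: "cyc_plus_bd B S1 dB \<subseteq> cyc_plus_bd B S0 dB"
  proof
    fix u assume "u \<in> cyc_plus_bd B S1 dB"
    then obtain z w where u: "u = (\<lambda>c. z c + w c)" and z: "z \<in> EV B" "z \<in> supp_in S1"
      "lin B dB z = (\<lambda>_. 0)" and w: "w \<in> lin B dB ` EV B"
      unfolding cyc_plus_bd_def by blast
    obtain w0 where w0: "w0 \<in> EV B" "w = lin B dB w0" using w by blast
    define z' where "z' = (\<lambda>c. z c + (- z p) * bvec p c)"
    define w0' where "w0' = (\<lambda>c. w0 c + z p * bvec q c)"
    have lz': "lin B dB z' = (\<lambda>_. 0)"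
      unfolding z'_def lin_lincomb using z(3) dBp by simp
    have lw': "lin B dB w0' = (\<lambda>c. w c + z p * bvec p c)"
      unfolding w0'_def lin_lincomb using w0(2) dBq by simp
    have uu: "u = (\<lambda>c. z' c + lin B dB w0' c)"
      unfolding u lw' z'_def by (simp add: algebra_simps)
    have z'EV: "z' \<in> EV B" using z(1) pB unfolding z'_def EV_def bvec_def by auto
    have z'S: "z' \<in> supp_in S0"
      unfolding supp_in_def
    proof (rule CollectI, intro allI impI)
      fix c assume c: "c \<notin> S0"
      show "z' c = 0"
      proof (cases "c = p")
        case True then show ?thesis unfolding z'_def bvec_def by simp
      next
        case False
        then have "c \<notin> S1" using c unfolding S0_def S1_def by blast
        then have "z c = 0" using z(2) unfolding supp_in_def by blast
        then show ?thesis using False unfolding z'_def bvec_def by simp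
      qed
    qed
    have w0'EV: "w0' \<in> EV B" using w0(1) qB unfolding w0'_def EV_def bvec_def by auto
    show "u \<in> cyc_plus_bd B S0 dB"
      unfolding cyc_plus_bd_def using uu z'EV z'S lz' w0'EV by blast
  qed
  have sup: "cyc_plus_bd B S0 dB \<subseteq> cyc_plus_bd B S1 dB"
  proof -
    have "supp_in S0 \<subseteq> supp_in S1" unfolding supp_in_def S0_def S1_def by blast
    then show ?thesis unfolding cyc_plus_bd_def by blast
  qed
  have "cyc_plus_bd B S1 dB = cyc_plus_bd B S0 dB" using sub sup by (rule subset_antisym)
  then show False using pH unfolding H_ess_def S1_def S0_def dB_def by simp
qed

lemma main: assumes pH: "p \<in> H_ess A B r d" and x: "x \<in> X" and dxp: "d x p \<noteq> 0"
  shows "is_pair A r' deg d x p"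
proof -
  have pB: "p \<in> B" using pH unfolding H_ess_def by blast
  have xAB: "x \<in> A - B" and xY: "x \<notin> Y" using x unfolding X_def' by blast+
  have "p \<notin> Q" using CQ0[OF xAB xY] dxp by blast
  moreover have "p \<notin> R" by (rule p_notR[OF pH])
  ultimately have pP: "p \<in> P" using pB unfolding P_def' by blast
  have "D1 x = bvec p" by (rule X_single[OF x pP dxp])
  then show ?thesis unfolding is_pair_def baran .
qed

end

theorem lemma3p6:
  fixes A B :: "'a set" and r :: "('a \<times> 'a) set" and deg :: "'a \<Rightarrow> int"
    and d :: "'a \<Rightarrow> 'a \<Rightarrow> 'k::field" and x p :: 'a
  assumes "finite A"
    and "strict_linear_order_on A r"
    and "quasi_elementary A B r deg d"
    and "p \<in> H_ess A B r d"
    and "x \<in> QE_X A B d"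
    and "d x p \<noteq> 0"
  shows "is_pair A (reorder A B r) deg d x p"
proof -
  interpret qe A B r deg d using assms(1-3) by unfold_locales
  show ?thesis by (rule main[OF assms(4-6)])
qed


end
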